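(* Let $n\ge3$ and let $E$ be a closed subset of the unit ball $B_1\subset\mathbb{R}^n$ with $0\in E$ and $B_{1/4}\setminus E\neq\emptyset$. Assume there do NOT exist a point $x_0$, sequences $x_k,y_k,z_k\in B_{1/2}$, and constants $a>1$, $\beta>0$ such that: (1) $x_k,y_k\in E$, $z_k\notin E$, and $x_k,y_k,z_k\to x_0$; (2) with $r_k=|x_k-y_k|$, one has $\frac1ar_k<|x_k-z_k|<ar_k$ and $\frac1ar_k<|y_k-z_k|<ar_k$ for all $k$; (3) $V(x_k,B_{\beta r_k}(z_k))\subset B_1\setminus E$ and $V(y_k,B_{\beta r_k}(z_k))\subset B_1\setminus E$ for all $k$. Then $E\cap B_{1/4}$ is a finite set.
   Context: $B_r(x)$ is the Euclidean ball of radius $r$ centered at $x$, $B_r=B_r(0)$. For $x\in\mathbb{R}^n$ and a ball $B_r(x')$, $V(x,B_r(x'))=\{(1-t)x+ty:t\in(0,1),\ y\in B_r(x')\}$. *)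

theory Defs
  imports "HOL-Analysis.Analysis"
begin

definition cone_V :: "'a::real_vector \<Rightarrow> 'a set \<Rightarrow> 'a set" where
  "cone_V x S = {(1 - t) *\<^sub>R x + t *\<^sub>R y | t y. t \<in> {0<..<1} \<and> y \<in> S}"

end

theory Submission
  imports Defs
begin

lemma cone_sub:
  fixes x c :: "'a::real_normed_vector"
  assumes "dist x c \<le> R" "S \<subseteq> ball c R"
  shows "cone_V x S \<subseteq> ball c R"
proof
  fix p assume "p \<in> cone_V x S"
  then obtain t y where p: "p = (1 - t) *\<^sub>R x + t *\<^sub>R y" and t: "t \<in> {0<..<1}" and y: "y \<in> S"
    unfolding cone_V_def by blast
  have yc: "norm (y - c) < R" using y assms(2) by (auto simp: dist_norm norm_minus_commute)
  have xc: "norm (x - c) \<le> R" using assms(1) by (simp add: dist_norm)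
  have "p - c = (1 - t) *\<^sub>R (x - c) + t *\<^sub>R (y - c)" using p by (simp add: algebra_simps)
  hence "norm (p - c) \<le> (1 - t) * norm (x - c) + t * norm (y - c)"
    using t norm_triangle_ineq[of "(1 - t) *\<^sub>R (x - c)" "t *\<^sub>R (y - c)"] by simp
  also have "\<dots> < (1 - t) * R + t * R"
    using t xc yc by (intro add_le_less_mono mult_left_mono mult_strict_left_mono) auto
  finally show "p \<in> ball c R" by (simp add: dist_norm norm_minus_commute algebra_simps)
qed



lemma TB:
  fixes x y v v' :: "'a::real_normed_vector"
  assumes xy: "x \<noteq> y" and dvx: "dist v x = d" and dvy': "dist v' y = d'"
    and vy: "d \<le> dist v y" and vx': "d' \<le> dist v' x" and vv': "dist v v' < d/20"
  shows "\<exists>z. ball z (1/4 * dist x y) \<subseteq> ball v d \<and> ball z (1/4 * dist x y) \<subseteq> ball v' d' \<and>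
           dist x y / 30 < dist x z \<and> dist x z < 30 * dist x y \<and>
           dist x y / 30 < dist y z \<and> dist y z < 30 * dist x y \<and> dist x z \<le> 2 * d"
proof -
  define r where "r = dist x y"
  have r0: "r > 0" using xy by (simp add: r_def)
  have d0: "d > 0" using vv' zero_le_dist[of v v'] by linarith
  have t1: "dist v y \<le> dist v v' + dist v' y" by (rule dist_triangle)
  have t3: "r \<le> dist x v + dist v y" unfolding r_def by (rule dist_triangle)
  have t5: "dist v' x \<le> dist v' y + dist y x" by (rule dist_triangle)
  have t6: "dist v x \<le> dist v v' + dist v' x" by (rule dist_triangle)
  have t7: "dist v' x \<le> dist v' v + dist v x" by (rule dist_triangle)
  have cm: "dist x v = d" "dist y x = r" "dist v' v = dist v v'" using dvx r_def by (auto simp: dist_commute)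
  have dd1: "d' \<ge> d - d/20" using vy t1 dvy' vv' by linarith
  have dd2: "d' \<le> d + d/20" using vx' t7 cm dvx vv' by linarith
  have vyb: "dist v y \<le> d + d/10" using t1 dvy' dd2 vv' by linarith
  have rb: "r \<le> 2*d + d/10" using t3 cm vyb by linarith
  show ?thesis
  proof (cases "r \<ge> d/20")
    case True
    have b1: "ball v (1/4 * r) \<subseteq> ball v d" using rb d0 by (intro subset_ball) linarith
    have b2: "ball v (1/4 * r) \<subseteq> ball v' d'"
    proof
      fix p assume "p \<in> ball v (1/4 * r)"
      hence "dist v p < 1/4 * r" by simp
      moreover have "dist v' p \<le> dist v' v + dist v p" by (rule dist_triangle)
      ultimately have "dist v' p < d'" using cm vv' rb dd1 d0 by linarith
      thus "p \<in> ball v' d'" by simp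
    qed
    show ?thesis
      apply (rule exI[of _ v])
      using b1 b2 True cm vy vyb rb r0 d0 unfolding r_def[symmetric]
      by (simp add: dist_commute[of y v])
  next
    case False
    define c1 where "c1 = x + (2*r/d) *\<^sub>R (v - x)"
    define c2 where "c2 = y + (2*r/d') *\<^sub>R (v' - y)"
    have dp: "d' > 0" using dd1 d0 by linarith
    have e1: "c1 - v = (1 - 2*r/d) *\<^sub>R (x - v)" unfolding c1_def by (simp add: algebra_simps)
    have "dist c1 v = \<bar>1 - 2*r/d\<bar> * d" using e1 cm by (simp add: dist_norm)
    also have "\<bar>1 - 2*r/d\<bar> = 1 - 2*r/d" using False d0 by (simp add: field_simps)
    finally have c1v0: "dist c1 v = (1 - 2*r/d) * d" .
    have "(1 - 2*r/d) * d = d - 2*r" using d0 by (simp add: left_diff_distrib)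
    hence c1v: "dist c1 v = d - 2*r" using c1v0 by simp
    have e2: "c2 - v' = (1 - 2*r/d') *\<^sub>R (y - v')" unfolding c2_def by (simp add: algebra_simps)
    have "dist c2 v' = \<bar>1 - 2*r/d'\<bar> * d'" using e2 dvy' by (simp add: dist_norm norm_minus_commute)
    also have "\<bar>1 - 2*r/d'\<bar> = 1 - 2*r/d'" using False d0 dd1 dp by (simp add: field_simps)
    finally have c2v0: "dist c2 v' = (1 - 2*r/d') * d'" .
    have "(1 - 2*r/d') * d' = d' - 2*r" using dp by (simp add: left_diff_distrib)
    hence c2v: "dist c2 v' = d' - 2*r" using c2v0 by simp
    have xc1: "dist x c1 = 2*r" unfolding c1_def using cm r0 d0
      by (simp add: dist_norm norm_minus_commute)
    define nu where "nu = (1/d) *\<^sub>R (v - x)"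
    define nu' where "nu' = (1/d') *\<^sub>R (v' - y)"
    have e3: "nu - nu' = (1/d) *\<^sub>R ((v - v') - (x - y)) + (1/d - 1/d') *\<^sub>R (v' - y)"
      unfolding nu_def nu'_def by (simp add: algebra_simps)
    have n1: "norm ((v - v') - (x - y)) \<le> dist v v' + r"
      using norm_triangle_ineq4[of "v - v'" "x - y"] by (simp add: dist_norm r_def)
    have n1': "norm ((1/d) *\<^sub>R ((v - v') - (x - y))) \<le> (1/d) * (dist v v' + r)"
      using n1 d0 by (simp add: divide_right_mono)
    have n1'': "(1/d) * (dist v v' + r) < 1/10" using vv' False d0 by (simp add: field_simps)
    have dd3: "d' \<ge> d - d/10" using t6 t5 cm vv' dvy' dvx False by linarith
    have n2: "norm ((1/d - 1/d') *\<^sub>R (v' - y)) = \<bar>(1/d - 1/d') * d'\<bar>"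
      using dvy' dp by (simp add: dist_norm norm_minus_commute abs_mult)
    have n2a: "(1/d - 1/d') * d' = d'/d - 1" using dp by (simp add: left_diff_distrib)
    have n2b: "d'/d \<le> 1 + 1/10" using dd2 d0 by (simp add: pos_divide_le_eq)
    have n2c: "1 - 1/10 \<le> d'/d" using dd3 d0 by (simp add: pos_le_divide_eq)
    have n2': "\<bar>(1/d - 1/d') * d'\<bar> \<le> 1/10" unfolding n2a abs_le_iff using n2b n2c by linarith
    have nn: "norm (nu - nu') \<le> 1/5" unfolding e3
      using norm_triangle_ineq[of "(1/d) *\<^sub>R ((v - v') - (x - y))" "(1/d - 1/d') *\<^sub>R (v' - y)"]
        n1' n1'' n2 n2' by linarith
    have e4: "c1 - c2 = (x - y) + (2*r) *\<^sub>R (nu - nu')"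
      unfolding c1_def c2_def nu_def nu'_def by (simp add: algebra_simps)
    have "norm (c1 - c2) \<le> r + 2*r * norm (nu - nu')"
      using e4 norm_triangle_ineq[of "x - y" "(2*r) *\<^sub>R (nu - nu')"] r0 by (simp add: dist_norm r_def)
    also have "\<dots> \<le> r + 2*r*(1/5)" using nn r0 by (intro add_left_mono mult_left_mono) auto
    finally have c12: "dist c1 c2 \<le> r + 2*r/5" by (simp add: dist_norm)
    have b1: "ball c1 (1/4 * r) \<subseteq> ball v d"
    proof
      fix p assume "p \<in> ball c1 (1/4 * r)"
      hence "dist c1 p < 1/4 * r" by simp
      moreover have "dist v p \<le> dist v c1 + dist c1 p" by (rule dist_triangle)
      moreover have "dist v c1 = d - 2*r" using c1v by (simp add: dist_commute)
      ultimately have "dist v p < d" using r0 by linarith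
      thus "p \<in> ball v d" by simp
    qed
    have b2: "ball c1 (1/4 * r) \<subseteq> ball v' d'"
    proof
      fix p assume "p \<in> ball c1 (1/4 * r)"
      hence "dist c1 p < 1/4 * r" by simp
      moreover have "dist v' p \<le> dist v' c2 + dist c2 p" by (rule dist_triangle)
      moreover have "dist c2 p \<le> dist c2 c1 + dist c1 p" by (rule dist_triangle)
      moreover have "dist v' c2 = d' - 2*r" "dist c2 c1 = dist c1 c2" using c2v by (simp_all add: dist_commute)
      ultimately have "dist v' p < d'" using c12 r0 by linarith
      thus "p \<in> ball v' d'" by simp
    qed
    have yc1: "dist y c1 \<le> dist y x + dist x c1" by (rule dist_triangle)
    have yc2: "dist x c1 \<le> dist x y + dist y c1" by (rule dist_triangle)
    show ?thesis
      apply (rule exI[of _ c1])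
      using b1 b2 xc1 yc1 yc2 cm r0 d0 False unfolding r_def[symmetric]
      by simp
  qed
qed



definition conf :: "'a::euclidean_space set \<Rightarrow> 'a \<Rightarrow> 'a \<Rightarrow> 'a \<Rightarrow> bool" where
"conf E x y z \<longleftrightarrow> x \<in> ball 0 (1/2) \<and> y \<in> ball 0 (1/2) \<and> z \<in> ball 0 (1/2) \<and>
   x \<in> E \<and> y \<in> E \<and> z \<notin> E \<and>
   dist x y / 30 < dist x z \<and> dist x z < 30 * dist x y \<and>
   dist x y / 30 < dist y z \<and> dist y z < 30 * dist x y \<and>
   cone_V x (ball z (1/4 * dist x y)) \<subseteq> ball 0 1 - E \<and>
   cone_V y (ball z (1/4 * dist x y)) \<subseteq> ball 0 1 - E"

lemma ball_empty:
  assumes "infdist v E = d"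
  shows "ball v d \<inter> E = {}"
  using assms infdist_le[of _ E v] by fastforce

lemma ball_in_unit:
  fixes v :: "'a::real_normed_vector"
  assumes "norm v + d \<le> 1"
  shows "ball v d \<subseteq> ball 0 1"
proof
  fix p assume "p \<in> ball v d"
  hence "dist v p < d" by simp
  moreover have "norm p \<le> norm v + dist v p"
    using norm_triangle_ineq[of v "p - v"] by (simp add: dist_norm norm_minus_commute)
  ultimately show "p \<in> ball 0 1" using assms by simp
qed

lemma local_conf:
  fixes E :: "'a::euclidean_space set"
  assumes dim: "DIM('a) \<ge> 2" and cl: "closed E" and x0E: "x0 \<in> E" and nx0: "norm x0 \<le> 1/4"
    and NI: "\<forall>e>0. \<exists>p\<in>E. p \<noteq> x0 \<and> dist p x0 < e"
    and EX: "\<forall>e>0. \<exists>w. w \<notin> E \<and> dist w x0 < e"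
    and s0: "0 < s0" "s0 \<le> 1/100"
  shows "\<exists>x y z. conf E x y z \<and> dist x x0 < 3 * s0 \<and> dist y x0 < 3 * s0 \<and> dist z x0 < 3 * s0"
proof (rule ccontr)
  assume NC: "\<not> ?thesis"
  have Ene: "E \<noteq> {}" using x0E by auto
  obtain w where wE: "w \<notin> E" and wx0: "dist w x0 < s0/4" using EX[rule_format, of "s0/4"] s0 by auto
  obtain u where uE: "u \<in> E" and wu: "infdist w E = dist w u"
    using infdist_attains_inf[OF cl Ene] by blast
  have "dist w u \<le> dist w x0" using wu infdist_le[OF x0E, of w] by simp
  moreover have "dist u x0 \<le> dist u w + dist w x0" by (rule dist_triangle)
  ultimately have ux0: "dist u x0 < s0/2" using wx0 by (simp add: dist_commute)
  define t where "t = dist w u"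
  have t0: "t > 0" using wE uE by (auto simp: t_def)
  define Om where "Om = ball u s0 - {u}"
  define A where "A = {v \<in> Om. infdist v E = dist v u}"
  have Ane: "A \<noteq> {}"
  proof -
    define s where "s = min t (s0/2)"
    define w' where "w' = u + (s/t) *\<^sub>R (w - u)"
    have s1: "0 < s" "s \<le> t" "s < s0" using t0 s0 by (auto simp: s_def)
    have nwu: "norm (w - u) = t" by (simp add: t_def dist_norm)
    have "w' - u = (s/t) *\<^sub>R (w - u)" by (simp add: w'_def)
    hence "dist w' u = (s/t) * t" using s1 t0 nwu by (simp add: dist_norm)
    hence w'u: "dist w' u = s" using t0 by simp
    have e: "w - w' = (1 - s/t) *\<^sub>R (w - u)" unfolding w'_def by (simp add: algebra_simps)
    have st: "0 \<le> 1 - s/t" using s1 t0 by (simp add: field_simps)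
    have "dist w w' = (1 - s/t) * t" using e st nwu by (simp add: dist_norm)
    moreover have "(1 - s/t) * t = t - s" using t0 by (simp add: left_diff_distrib)
    ultimately have ww': "dist w w' = t - s" by simp
    have "infdist w' E = s"
    proof (rule antisym)
      show "infdist w' E \<le> s" using infdist_le[OF uE, of w'] w'u by simp
      obtain e where eE: "e \<in> E" and ee: "infdist w' E = dist w' e"
        using infdist_attains_inf[OF cl Ene] by blast
      have "t \<le> dist w e" using infdist_le[OF eE, of w] wu t_def by simp
      moreover have "dist w e \<le> dist w w' + dist w' e" by (rule dist_triangle)
      ultimately show "s \<le> infdist w' E" using ee ww' by simp
    qed
    hence "w' \<in> A" using w'u s1 unfolding A_def Om_def by (auto simp: dist_commute)
    thus ?thesis by auto
  qed
  have Acl: "closedin (top_of_set Om) A"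
  proof -
    have "closed {v. infdist v E = dist v u}"
      by (intro closed_Collect_eq continuous_on_infdist[OF continuous_on_id] continuous_on_dist[OF continuous_on_id continuous_on_const])
    moreover have "A = Om \<inter> {v. infdist v E = dist v u}" unfolding A_def by auto
    ultimately show ?thesis by (simp add: closedin_closed_Int)
  qed
  have Aop: "openin (top_of_set Om) A"
    unfolding openin_euclidean_subtopology_iff
  proof (intro conjI ballI)
    show "A \<subseteq> Om" unfolding A_def by auto
  next
    fix v assume vA: "v \<in> A"
    define d where "d = dist v u"
    have vOm: "v \<in> Om" and vd: "infdist v E = d" using vA unfolding A_def d_def by auto
    have d0: "d > 0" "d < s0" using vOm unfolding Om_def d_def by (auto simp: dist_commute)
    show "\<exists>e>0. \<forall>v'\<in>Om. dist v' v < e \<longrightarrow> v' \<in> A"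
    proof (intro exI[of _ "d/20"] conjI ballI impI)
      show "d/20 > 0" using d0 by simp
      fix v' assume v'Om: "v' \<in> Om" and vv': "dist v' v < d/20"
      obtain y where yE: "y \<in> E" and yy: "infdist v' E = dist v' y"
        using infdist_attains_inf[OF cl Ene] by blast
      define d' where "d' = dist v' y"
      show "v' \<in> A"
      proof (rule ccontr)
        assume nA: "v' \<notin> A"
        hence yu: "u \<noteq> y" using v'Om yy unfolding A_def by auto
        have c1: "d \<le> dist v y" using infdist_le[OF yE, of v] vd by simp
        have c2: "d' \<le> dist v' u" using infdist_le[OF uE, of v'] yy d'_def by simp
        have c3: "dist v v' < d/20" using vv' by (simp add: dist_commute)
        obtain z where zb1: "ball z (1/4 * dist u y) \<subseteq> ball v d"
          and zb2: "ball z (1/4 * dist u y) \<subseteq> ball v' d'"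
          and r1: "dist u y / 30 < dist u z" "dist u z < 30 * dist u y"
          and r2: "dist u y / 30 < dist y z" "dist y z < 30 * dist u y"
          and uz: "dist u z \<le> 2 * d"
          using TB[where x=u and y=y and v=v and v'=v' and d=d and d'=d', OF yu d_def[symmetric] d'_def[symmetric] c1 c2 c3]
          by blast
        have emp1: "ball v d \<inter> E = {}" using ball_empty[OF vd] .
        have emp2: "ball v' d' \<inter> E = {}" using ball_empty[of v' E d'] yy d'_def by simp
        have vx0: "dist v x0 < 3/2 * s0"
          using dist_triangle[of v x0 u] ux0 d0 d_def by linarith
        have v'u: "dist v' u < s0" using v'Om unfolding Om_def by (simp add: dist_commute)
        have v'x0: "dist v' x0 < 3/2 * s0"
          using dist_triangle[of v' x0 u] ux0 v'u by linarith
        have nv: "norm v \<le> norm x0 + dist v x0"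
          using norm_triangle_ineq[of x0 "v - x0"] by (simp add: dist_norm)
        have nv': "norm v' \<le> norm x0 + dist v' x0"
          using norm_triangle_ineq[of x0 "v' - x0"] by (simp add: dist_norm)
        have u1: "ball v d \<subseteq> ball 0 1"
          using nv vx0 nx0 d0 s0 by (intro ball_in_unit) linarith
        have u2: "ball v' d' \<subseteq> ball 0 1"
          using nv' v'x0 nx0 c2 v'u s0 by (intro ball_in_unit) linarith
        have cone1: "cone_V u (ball z (1/4 * dist u y)) \<subseteq> ball 0 1 - E"
          using cone_sub[of u v d, OF _ zb1] u1 emp1 d_def by (auto simp: dist_commute)
        have cone2: "cone_V y (ball z (1/4 * dist u y)) \<subseteq> ball 0 1 - E"
          using cone_sub[of y v' d', OF _ zb2] u2 emp2 d'_def by (auto simp: dist_commute)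
        have zin: "z \<in> ball z (1/4 * dist u y)" using yu by simp
        have zE: "z \<notin> E" using zb1 emp1 zin by blast
        have yx0: "dist y x0 < 3 * s0"
          using dist_triangle[of y x0 v'] dist_commute[of y v'] v'x0 c2 v'u d'_def s0 by linarith
        have zx0: "dist z x0 < 3 * s0"
          using dist_triangle[of z x0 u] dist_commute[of z u] ux0 uz d0 by linarith
        have ux0': "dist u x0 < 3 * s0" using ux0 s0 by simp
        have nb: "p \<in> ball 0 (1/2)" if "dist p x0 < 3 * s0" for p :: 'a
        proof -
          have "norm p \<le> norm x0 + dist p x0"
            using norm_triangle_ineq[of x0 "p - x0"] by (simp add: dist_norm)
          hence "norm p < 1/2" using that nx0 s0 by linarith
          thus ?thesis by simp
        qed
        have "conf E u y z"
          unfolding conf_def using nb[OF ux0'] nb[OF yx0] nb[OF zx0] uE yE zE r1 r2 cone1 cone2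
          by simp
        thus False using NC ux0' yx0 zx0 by blast
      qed
    qed
  qed
  have "connected Om" unfolding Om_def by (rule connected_punctured_ball[OF dim])
  hence AOm: "A = Om" using Ane Acl Aop unfolding connected_clopen by blast
  obtain p where pE: "p \<in> E" and px0: "p \<noteq> x0" and pd: "dist p x0 < s0/2" using NI[rule_format, of "s0/2"] s0 by auto
  obtain q where qE: "q \<in> E" and qu: "q \<noteq> u" and qd: "dist q u < s0"
  proof (cases "x0 = u")
    case True
    have "p \<noteq> u" "dist p u < s0" using True px0 pd s0 by auto
    thus ?thesis using that[OF pE] by blast
  next
    case False
    have "x0 \<noteq> u" "dist x0 u < s0" using False ux0 s0 by (auto simp: dist_commute)
    thus ?thesis using that[OF x0E] by blast
  qed
  hence "q \<in> A" using AOm unfolding Om_def by (simp add: dist_commute)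
  hence "infdist q E = dist q u" unfolding A_def by simp
  moreover have "infdist q E = 0" using qE by (rule infdist_zero)
  ultimately show False using qu by simp
qed



lemma pick_x0:
  fixes E :: "'a::euclidean_space set"
  assumes cl: "closed E" and p: "p \<in> ball 0 (1/4)" "p \<notin> E" and inf: "infinite (E \<inter> ball 0 (1/4))"
  shows "\<exists>x0\<in>E. norm x0 \<le> 1/4 \<and> (\<forall>e>0. \<exists>q\<in>E. q \<noteq> x0 \<and> dist q x0 < e)
           \<and> (\<forall>e>0. \<exists>w. w \<notin> E \<and> dist w x0 < e)"
proof -
  have sub: "E \<inter> ball 0 (1/4) \<subseteq> cball (0::'a) (1/4)" by auto
  obtain a0 where a0c: "a0 \<in> cball 0 (1/4)" and lim: "a0 islimpt (E \<inter> ball 0 (1/4))"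
    using Heine_Borel_imp_Bolzano_Weierstrass[OF compact_cball inf sub] by blast
  have limE: "a0 islimpt E" using lim islimpt_subset by blast
  have a0E: "a0 \<in> E" using cl limE closed_limpt by blast
  have NIa: "\<forall>e>0. \<exists>q\<in>E. q \<noteq> a0 \<and> dist q a0 < e" using limE islimpt_approachable by blast
  show ?thesis
  proof (cases "\<forall>e>0. \<exists>w. w \<notin> E \<and> dist w a0 < e")
    case True then show ?thesis using a0E a0c NIa by auto
  next
    case False
    then obtain e where e0: "e > 0" and eE: "\<And>w. dist w a0 < e \<Longrightarrow> w \<in> E" by auto
    define g where "g = (\<lambda>t::real. a0 + t *\<^sub>R (p - a0))"
    define T where "T = {t. 0 \<le> t \<and> t \<le> 1 \<and> g t \<notin> E}"
    define tau where "tau = Inf T"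
    have pa: "p \<noteq> a0" using p a0E by auto
    define L where "L = norm (p - a0)"
    have L0: "L > 0" using pa by (simp add: L_def)
    have dg: "dist (g s) (g t) = \<bar>s - t\<bar> * L" for s t
    proof -
      have "g s - g t = (s - t) *\<^sub>R (p - a0)" unfolding g_def by (simp add: algebra_simps)
      thus ?thesis by (simp add: dist_norm L_def)
    qed
    have g0: "g 0 = a0" by (simp add: g_def)
    have T1: "1 \<in> T" using p unfolding T_def g_def by simp
    have bdd: "bdd_below T" unfolding T_def by (rule bdd_belowI[of _ 0]) auto
    have tle1: "tau \<le> 1" unfolding tau_def using T1 bdd by (rule cInf_lower)
    have tge: "e / L \<le> tau" unfolding tau_def
    proof (rule cInf_greatest)
      show "T \<noteq> {}" using T1 by auto
      fix t assume tT: "t \<in> T"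
      hence "\<not> dist (g t) a0 < e" using eE unfolding T_def by auto
      hence "e \<le> t * L" using dg[of t 0] g0 tT unfolding T_def by simp
      thus "e / L \<le> t" using L0 by (simp add: field_simps)
    qed
    have tpos: "tau > 0" using tge e0 L0 by (smt (verit) divide_pos_pos)
    have below: "g s \<in> E" if "0 \<le> s" "s < tau" for s
    proof (rule ccontr)
      assume "g s \<notin> E"
      hence "s \<in> T" using that tle1 unfolding T_def by simp
      hence "tau \<le> s" unfolding tau_def using bdd by (rule cInf_lower)
      thus False using that by simp
    qed
    have near: "\<exists>s. 0 \<le> s \<and> s < tau \<and> dist (g s) (g tau) < r \<and> g s \<noteq> g tau" if "r > 0" for r
    proof -
      define m where "m = min tau (r / (2*L))"
      have m0: "m > 0" "m \<le> tau" "m \<le> r/(2*L)" using tpos that L0 by (auto simp: m_def)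
      have mL: "m * L \<le> r/2" using m0 L0 by (simp add: field_simps)
      have dd: "dist (g (tau - m/2)) (g tau) = m * L / 2" using dg[of "tau - m/2" tau] m0 by simp
      have q1: "dist (g (tau - m/2)) (g tau) < r" using dd mL that by linarith
      have "0 < m * L / 2" using m0 L0 by simp
      hence "0 < dist (g (tau - m/2)) (g tau)" using dd by linarith
      hence q2: "g (tau - m/2) \<noteq> g tau" by simp
      show ?thesis using m0 q1 q2 by (intro exI[of _ "tau - m/2"]) auto
    qed
    have gtau: "g tau \<in> E"
    proof (rule ccontr)
      assume "g tau \<notin> E"
      moreover have "open (- E)" using cl by auto
      ultimately obtain r where r0: "r > 0" and rb: "ball (g tau) r \<subseteq> - E"
        using open_contains_ball by blast
      obtain s where "0 \<le> s" "s < tau" "dist (g s) (g tau) < r" using near[OF r0] by blast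
      thus False using below rb by (auto simp: dist_commute)
    qed
    have ng: "norm (g tau) \<le> 1/4"
    proof -
      have "g tau = (1 - tau) *\<^sub>R a0 + tau *\<^sub>R p" unfolding g_def by (simp add: algebra_simps)
      hence "norm (g tau) \<le> (1 - tau) * norm a0 + tau * norm p"
        using norm_triangle_ineq[of "(1 - tau) *\<^sub>R a0" "tau *\<^sub>R p"] tpos tle1 by (simp add: abs_of_nonneg)
      also have "\<dots> \<le> (1 - tau) * (1/4) + tau * (1/4)"
        using a0c p tpos tle1 by (intro add_mono mult_left_mono) auto
      also have "\<dots> = 1/4" by (simp add: field_simps)
      finally show ?thesis .
    qed
    have NI: "\<forall>r>0. \<exists>q\<in>E. q \<noteq> g tau \<and> dist q (g tau) < r"
    proof (intro allI impI)
      fix r :: real assume "r > 0"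
      then obtain s where "0 \<le> s" "s < tau" "dist (g s) (g tau) < r" "g s \<noteq> g tau" using near by blast
      thus "\<exists>q\<in>E. q \<noteq> g tau \<and> dist q (g tau) < r" using below by blast
    qed
    have EX: "\<forall>r>0. \<exists>w. w \<notin> E \<and> dist w (g tau) < r"
    proof (intro allI impI)
      fix r :: real assume r0: "r > 0"
      have "Inf T < tau + r / (2*L)" using r0 L0 unfolding tau_def by simp
      then obtain t where tT: "t \<in> T" and tl: "t < tau + r/(2*L)"
        using cInf_less_iff[of T] T1 bdd by auto
      have "tau \<le> t" unfolding tau_def using bdd tT by (rule cInf_lower[rotated])
      hence d1: "dist (g t) (g tau) = (t - tau) * L" using dg[of t tau] by simp
      have "(t - tau) * L < r/(2*L) * L" using tl L0 by (intro mult_strict_right_mono) auto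
      moreover have "r/(2*L) * L = r/2" using L0 by simp
      ultimately have "dist (g t) (g tau) < r" using d1 r0 by linarith
      thus "\<exists>w. w \<notin> E \<and> dist w (g tau) < r" using tT unfolding T_def by blast
    qed
    show ?thesis using gtau ng NI EX by blast
  qed
qed

lemma conv_aux:
  fixes X :: "nat \<Rightarrow> 'a::metric_space"
  assumes "\<And>k. dist (X k) x0 < 3 * (1 / (100 * (real k + 1)))"
  shows "X \<longlonglongrightarrow> x0"
  unfolding lim_sequentially
proof (intro allI impI)
  fix r :: real assume r0: "r > 0"
  obtain N where N: "inverse (real (Suc N)) < r" using reals_Archimedean[OF r0] by blast
  show "\<exists>N. \<forall>n\<ge>N. dist (X n) x0 < r"
  proof (intro exI allI impI)
    fix n assume "N \<le> n"
    hence Nn: "real N \<le> real n" by simp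
    have a1: "3 * (1 / (100 * (real n + 1))) \<le> 1 / (real n + 1)" by (simp add: field_simps)
    have a2: "1 / (real n + 1) \<le> 1 / (real N + 1)" using Nn by (intro divide_left_mono) auto
    have a3: "inverse (real (Suc N)) = 1 / (real N + 1)" by (simp add: inverse_eq_divide)
    have "3 * (1 / (100 * (real n + 1))) \<le> inverse (real (Suc N))" using a1 a2 a3 by linarith
    thus "dist (X n) x0 < r" using assms[of n] N by linarith
  qed
qed

theorem lemma4p1:
  fixes E :: "'a::euclidean_space set"
  assumes "DIM('a) \<ge> 3"
    and "closed E" and "E \<subseteq> ball 0 1" and "0 \<in> E"
    and "ball 0 (1/4) - E \<noteq> {}"
    and "\<not> (\<exists>(x0::'a) (xs::nat \<Rightarrow> 'a) ys zs (a::real) (\<beta>::real).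
            a > 1 \<and> \<beta> > 0 \<and>
            (\<forall>k. xs k \<in> ball 0 (1/2) \<and> ys k \<in> ball 0 (1/2) \<and> zs k \<in> ball 0 (1/2)) \<and>
            (\<forall>k. xs k \<in> E \<and> ys k \<in> E \<and> zs k \<notin> E) \<and>
            xs \<longlonglongrightarrow> x0 \<and> ys \<longlonglongrightarrow> x0 \<and> zs \<longlonglongrightarrow> x0 \<and>
            (\<forall>k. dist (xs k) (ys k) / a < dist (xs k) (zs k) \<and>
                 dist (xs k) (zs k) < a * dist (xs k) (ys k) \<and>
                 dist (xs k) (ys k) / a < dist (ys k) (zs k) \<and>
                 dist (ys k) (zs k) < a * dist (xs k) (ys k)) \<and>
            (\<forall>k. cone_V (xs k) (ball (zs k) (\<beta> * dist (xs k) (ys k))) \<subseteq> ball 0 1 - E \<and>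
                 cone_V (ys k) (ball (zs k) (\<beta> * dist (xs k) (ys k))) \<subseteq> ball 0 1 - E))"
  shows "finite (E \<inter> ball 0 (1/4))"
proof (rule ccontr)
  assume inf: "infinite (E \<inter> ball 0 (1/4))"
  obtain p where p: "p \<in> ball 0 (1/4)" "p \<notin> E" using assms(5) by blast
  obtain x0 where x0E: "x0 \<in> E" and nx0: "norm x0 \<le> 1/4"
    and NI: "\<forall>e>0. \<exists>q\<in>E. q \<noteq> x0 \<and> dist q x0 < e"
    and EX: "\<forall>e>0. \<exists>w. w \<notin> E \<and> dist w x0 < e"
    using pick_x0[OF assms(2) p inf] by blast
  have dim: "DIM('a) \<ge> 2" using assms(1) by simp
  have "\<forall>k::nat. \<exists>x y z. conf E x y z \<and> dist x x0 < 3 * (1 / (100 * (real k + 1)))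
          \<and> dist y x0 < 3 * (1 / (100 * (real k + 1))) \<and> dist z x0 < 3 * (1 / (100 * (real k + 1)))"
  proof
    fix k :: nat
    show "\<exists>x y z. conf E x y z \<and> dist x x0 < 3 * (1 / (100 * (real k + 1)))
          \<and> dist y x0 < 3 * (1 / (100 * (real k + 1))) \<and> dist z x0 < 3 * (1 / (100 * (real k + 1)))"
      by (rule local_conf[OF dim assms(2) x0E nx0 NI EX]) (auto simp: field_simps)
  qed
  then obtain X Y Z where XYZ: "\<And>k. conf E (X k) (Y k) (Z k) \<and> dist (X k) x0 < 3 * (1 / (100 * (real k + 1)))
          \<and> dist (Y k) x0 < 3 * (1 / (100 * (real k + 1))) \<and> dist (Z k) x0 < 3 * (1 / (100 * (real k + 1)))"
    by metis
  have lX: "X \<longlonglongrightarrow> x0" using XYZ by (intro conv_aux) blast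
  have lY: "Y \<longlonglongrightarrow> x0" using XYZ by (intro conv_aux) blast
  have lZ: "Z \<longlonglongrightarrow> x0" using XYZ by (intro conv_aux) blast
  have C: "\<And>k. conf E (X k) (Y k) (Z k)" using XYZ by blast
  have F1: "\<forall>k. X k \<in> ball 0 (1/2) \<and> Y k \<in> ball 0 (1/2) \<and> Z k \<in> ball 0 (1/2)"
    using C unfolding conf_def by blast
  have F2: "\<forall>k. X k \<in> E \<and> Y k \<in> E \<and> Z k \<notin> E" using C unfolding conf_def by blast
  have F3: "\<forall>k. dist (X k) (Y k) / 30 < dist (X k) (Z k) \<and>
                 dist (X k) (Z k) < 30 * dist (X k) (Y k) \<and>
                 dist (X k) (Y k) / 30 < dist (Y k) (Z k) \<and>
                 dist (Y k) (Z k) < 30 * dist (X k) (Y k)" using C unfolding conf_def by blast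
  have F4: "\<forall>k. cone_V (X k) (ball (Z k) (1/4 * dist (X k) (Y k))) \<subseteq> ball 0 1 - E \<and>
                 cone_V (Y k) (ball (Z k) (1/4 * dist (X k) (Y k))) \<subseteq> ball 0 1 - E"
    using C unfolding conf_def by blast
  have "\<exists>(x0::'a) (xs::nat \<Rightarrow> 'a) ys zs (a::real) (\<beta>::real).
            a > 1 \<and> \<beta> > 0 \<and>
            (\<forall>k. xs k \<in> ball 0 (1/2) \<and> ys k \<in> ball 0 (1/2) \<and> zs k \<in> ball 0 (1/2)) \<and>
            (\<forall>k. xs k \<in> E \<and> ys k \<in> E \<and> zs k \<notin> E) \<and>
            xs \<longlonglongrightarrow> x0 \<and> ys \<longlonglongrightarrow> x0 \<and> zs \<longlonglongrightarrow> x0 \<and>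
            (\<forall>k. dist (xs k) (ys k) / a < dist (xs k) (zs k) \<and>
                 dist (xs k) (zs k) < a * dist (xs k) (ys k) \<and>
                 dist (xs k) (ys k) / a < dist (ys k) (zs k) \<and>
                 dist (ys k) (zs k) < a * dist (xs k) (ys k)) \<and>
            (\<forall>k. cone_V (xs k) (ball (zs k) (\<beta> * dist (xs k) (ys k))) \<subseteq> ball 0 1 - E \<and>
                 cone_V (ys k) (ball (zs k) (\<beta> * dist (xs k) (ys k))) \<subseteq> ball 0 1 - E)"
    apply (rule exI[of _ x0], rule exI[of _ X], rule exI[of _ Y], rule exI[of _ Z],
           rule exI[of _ 30], rule exI[of _ "1/4"])
    using F1 F2 F3 F4 lX lY lZ by simp
  thus False using assms(6) by blast
qed


end
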